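(* Let $S=S'\wedge C$ be a scheduling problem on $n$ elements where $C$ is a contractible clause, let $V(C)=O_1\uplus\cdots\uplus O_k$ be the decomposition into $\sim_C$ equivalence classes ordered so that $O_i>O_j$ for $i<j$, and let $r_i=|O_i|-1$. Then $$\mathcal{S}_S=\mathcal{S}_{S'}-\left(\mathcal{S}_{S'\downarrow_{(r_1,\dots,r_k)}}\right)\uparrow^{(r_1,\dots,r_k)}.$$
   Context: A scheduling problem on $n$ elements is a Boolean formula over atoms $(x_i\le x_j)$, $i,j\in[n]$, with $(x_i=x_j)=(x_i\le x_j)\wedge(x_j\le x_i)$ and $(x_i\ne x_j)=\neg(x_i=x_j)$. A solution is $f:[n]\to\mathbb{P}=\{1,2,\dots\}$ making it true with $x_i=f(i)$; $\mathcal{S}_S=\sum_f y_{f(1)}\cdots y_{f(n)}$ over solutions, in noncommuting variables $y_1,y_2,\dots$. A formula $C$ given as $C=\bigvee_{(i,j)\in I}(x_i\ne x_j)$ with $I\subseteq[n]\times[n]$ is edge-like; $V(C)$ is the set of indices $i$ with $x_i$ appearing in $C$, and $\sim_C$ is the equivalence relation on $V(C)$ generated by $i\sim j$ for $(i,j)\in I$. For disjoint sets, $A>B$ means $a>b$ for all $a\in A,b\in B$. $C$ is a contractible clause if it is edge-like, $V(C)=\{m,m+1,\dots,n\}$ for some $1\le m\le n$, and the $\sim_C$ classes can be ordered $O_1,\dots,O_k$ with $O_i>O_j$ for $i<j$. With $r=\sum_i r_i$, the contraction $S'\downarrow_{(r_1,\dots,r_k)}$ is the scheduling problem on $n-r$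 elements obtained from $S'$ by replacing each variable $x_j$ by $x_{\psi(j)}$, where $\psi(j)=j$ for $j<m$ and $\psi(j)=m+k-i$ for $j\in O_i$. Induction: for nonnegative integers $r_1,\dots,r_k$ and a monomial $y_{i_1}\cdots y_{i_p}$ with $k\le p$, $y_{i_1}\cdots y_{i_p}\uparrow^{(r_1,\dots,r_k)}=y_{i_1}\cdots y_{i_{p-k}}y_{i_{p-k+1}}^{1+r_k}\cdots y_{i_p}^{1+r_1}$, extended linearly (termwise). *)

theory Defs
  imports Main
begin

datatype sform = FTrue | FFalse | Le nat nat | Not sform | And sform sform | Or sform sform

fun holds :: "(nat \<Rightarrow> nat) \<Rightarrow> sform \<Rightarrow> bool" where
  "holds f FTrue = True"
| "holds f FFalse = False"
| "holds f (Le i j) = (f i \<le> f j)"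
| "holds f (Not a) = (\<not> holds f a)"
| "holds f (And a b) = (holds f a \<and> holds f b)"
| "holds f (Or a b) = (holds f a \<or> holds f b)"

fun fvars :: "sform \<Rightarrow> nat set" where
  "fvars FTrue = {}"
| "fvars FFalse = {}"
| "fvars (Le i j) = {i, j}"
| "fvars (Not a) = fvars a"
| "fvars (And a b) = fvars a \<union> fvars b"
| "fvars (Or a b) = fvars a \<union> fvars b"

definition Eq :: "nat \<Rightarrow> nat \<Rightarrow> sform" where
  "Eq i j = And (Le i j) (Le j i)"

definition Neq :: "nat \<Rightarrow> nat \<Rightarrow> sform" where
  "Neq i j = Not (Eq i j)"

fun rename :: "(nat \<Rightarrow> nat) \<Rightarrow> sform \<Rightarrow> sform" where
  "rename \<psi> FTrue = FTrue"
| "rename \<psi> FFalse = FFalse"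
| "rename \<psi> (Le i j) = Le (\<psi> i) (\<psi> j)"
| "rename \<psi> (Not a) = Not (rename \<psi> a)"
| "rename \<psi> (And a b) = And (rename \<psi> a) (rename \<psi> b)"
| "rename \<psi> (Or a b) = Or (rename \<psi> a) (rename \<psi> b)"

text \<open>Noncommutative formal power series in y_1, y_2, ... with integer coefficients:
  a word y_(w!0) ... y_(w!(p-1)) is the list w; a series maps each word to its coefficient.\<close>
type_synonym ncseries = "nat list \<Rightarrow> int"

text \<open>S_S for a scheduling problem on n elements: the word f(1)...f(n) of each solution
  f : [n] -> P has coefficient 1 (solutions correspond bijectively to such words).\<close>
definition sched_series :: "nat \<Rightarrow> sform \<Rightarrow> ncseries" where
  "sched_series n \<phi> w =
     (if length w = n \<and> (\<forall>a\<in>set w. 1 \<le> a) \<and> holds (\<lambda>i. w ! (i - 1)) \<phi> then 1 else 0)"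

definition edge_clause :: "(nat \<times> nat) list \<Rightarrow> sform" where
  "edge_clause I = foldr (\<lambda>(i, j) acc. Or (Neq i j) acc) I FFalse"

definition VC :: "(nat \<times> nat) list \<Rightarrow> nat set" where
  "VC I = fst ` set I \<union> snd ` set I"

definition simC :: "(nat \<times> nat) list \<Rightarrow> (nat \<times> nat) set" where
  "simC I = (set I \<union> (set I)\<inverse>)\<^sup>* \<inter> (VC I \<times> VC I)"

definition set_gt :: "nat set \<Rightarrow> nat set \<Rightarrow> bool" where
  "set_gt A B \<longleftrightarrow> (\<forall>a\<in>A. \<forall>b\<in>B. a > b)"

definition contractible :: "nat \<Rightarrow> (nat \<times> nat) list \<Rightarrow> bool" where
  "contractible n I \<longleftrightarrow>
     (\<exists>m. 1 \<le> m \<and> m \<le> n \<and> VC I = {m..n}) \<and>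
     (\<exists>(k::nat) Os. VC I // simC I = Os ` {1..k} \<and>
        (\<forall>i\<in>{1..k}. \<forall>j\<in>{1..k}. i < j \<longrightarrow> set_gt (Os i) (Os j)))"

text \<open>Induction on a single monomial, with rs = [r_1,...,r_k]:
  y_(i_1)...y_(i_p) goes to y_(i_1)...y_(i_(p-k)) y_(i_(p-k+1))^(1+r_k) ... y_(i_p)^(1+r_1).\<close>
definition induce_word :: "nat list \<Rightarrow> nat list \<Rightarrow> nat list" where
  "induce_word rs u =
     take (length u - length rs) u @
     concat (map (\<lambda>(a, e). replicate (Suc e) a) (zip (drop (length u - length rs) u) (rev rs)))"

definition induce :: "nat list \<Rightarrow> ncseries \<Rightarrow> ncseries" where
  "induce rs T w = (\<Sum>u\<in>{u. length rs \<le> length u \<and> induce_word rs u = w}. T u)"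

definition contr_map :: "nat \<Rightarrow> nat \<Rightarrow> (nat \<Rightarrow> nat set) \<Rightarrow> nat \<Rightarrow> nat" where
  "contr_map m k Os j = (if j < m then j else m + k - (THE i. i \<in> {1..k} \<and> j \<in> Os i))"

end

theory Submission
  imports Defs
begin

lemma holds_cong: "(\<forall>i\<in>fvars \<phi>. f i = g i) \<Longrightarrow> holds f \<phi> = holds g \<phi>"
  by (induction \<phi>) auto

lemma holds_rename: "holds f (rename \<psi> \<phi>) = holds (f \<circ> \<psi>) \<phi>"
  by (induction \<phi>) auto

lemma holds_edge: "holds f (edge_clause I) \<longleftrightarrow> (\<exists>(i,j)\<in>set I. f i \<noteq> f j)"
  unfolding edge_clause_def by (induction I) (auto simp: Neq_def Eq_def)

definition stretch :: "nat list \<Rightarrow> 'a list \<Rightarrow> 'a list" where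
  "stretch cs u = concat (map (\<lambda>(a,c). replicate c a) (zip u cs))"

lemma stretch_Cons: "stretch (c # cs) (a # u) = replicate c a @ stretch cs u"
  by (simp add: stretch_def)

lemma stretch_length: "length cs = length u \<Longrightarrow> length (stretch cs u) = sum_list cs"
proof (induction u arbitrary: cs)
  case Nil thus ?case by (simp add: stretch_def)
next
  case (Cons a u) thus ?case by (cases cs) (auto simp: stretch_Cons)
qed

lemma stretch_nth:
  fixes u :: "'a list"
  assumes "length cs = length u" "N = sum_list cs"
    "\<forall>s t. s \<le> t \<longrightarrow> t < N \<longrightarrow> \<phi> s \<le> \<phi> t"
    "\<forall>t<N. \<phi> t < length u"
    "\<forall>j<length u. card {t. t < N \<and> \<phi> t = j} = cs ! j"
    "t < N"
  shows "stretch cs u ! t = u ! \<phi> t"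
using assms proof (induction u arbitrary: cs \<phi> N t)
  case Nil thus ?case by simp
next
  case (Cons a u')
  then obtain c cs' where cs: "cs = c # cs'" by (cases cs) auto
  let ?F = "{t. t < N \<and> \<phi> t = 0}"
  have cF: "card ?F = c" using Cons.prems(5) cs by force
  have finF: "finite ?F" by (rule finite_subset[of _ "{..<N}"]) auto
  have key: "\<forall>t<N. \<phi> t = 0 \<longleftrightarrow> t < c"
  proof (intro allI impI iffI)
    fix t assume t: "t < N" "\<phi> t = 0"
    have "{..t} \<subseteq> ?F" using Cons.prems(3) t by fastforce
    then have "card {..t} \<le> card ?F" by (rule card_mono[OF finF])
    thus "t < c" using cF by simp
  next
    fix t assume t: "t < N" "t < c"
    show "\<phi> t = 0"
    proof (rule ccontr)
      assume nz: "\<phi> t \<noteq> 0"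
      have "?F \<subseteq> {..<t}"
      proof
        fix s assume "s \<in> ?F"
        then have "s < N" "\<phi> s = 0" by auto
        show "s \<in> {..<t}"
        proof (rule ccontr)
          assume "s \<notin> {..<t}"
          then have "t \<le> s" by simp
          then have "\<phi> t \<le> \<phi> s" using Cons.prems(3) \<open>s < N\<close> by blast
          thus False using nz \<open>\<phi> s = 0\<close> by simp
        qed
      qed
      then have "card ?F \<le> t" using card_mono[of "{..<t}" ?F] by simp
      thus False using cF t by simp
    qed
  qed
  have cN: "c \<le> N" using Cons.prems(2) cs by simp
  show ?case
  proof (cases "t < c")
    case True
    then have "\<phi> t = 0" using key Cons.prems(6) by blast
    thus ?thesis using True cs by (simp add: stretch_Cons nth_append)
  next
    case False
    define \<phi>' where "\<phi>' s = \<phi> (s + c) - 1" for s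
    have pos: "\<forall>s. s + c < N \<longrightarrow> \<phi> (s+c) \<ge> 1" using key by force
    have IH: "stretch cs' u' ! (t - c) = u' ! \<phi>' (t - c)"
    proof (rule Cons.IH)
      show "length cs' = length u'" using Cons.prems(1) cs by simp
      show "N - c = sum_list cs'" using Cons.prems(2) cs by simp
      show "\<forall>s t. s \<le> t \<longrightarrow> t < N - c \<longrightarrow> \<phi>' s \<le> \<phi>' t"
        using Cons.prems(3) unfolding \<phi>'_def by (simp add: diff_le_mono)
      show "\<forall>t<N - c. \<phi>' t < length u'"
      proof (intro allI impI)
        fix s assume "s < N - c"
        then have "s + c < N" by simp
        then show "\<phi>' s < length u'" using Cons.prems(4) pos unfolding \<phi>'_def
          by (metis Suc_diff_1 One_nat_def Suc_le_eq length_Cons not_less_eq)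
      qed
      show "\<forall>j<length u'. card {t. t < N - c \<and> \<phi>' t = j} = cs' ! j"
      proof (intro allI impI)
        fix j assume j: "j < length u'"
        have eq: "{t. t < N \<and> \<phi> t = Suc j} = (\<lambda>s. s + c) ` {t. t < N - c \<and> \<phi>' t = j}"
        proof (rule set_eqI, rule iffI)
          fix x assume x: "x \<in> {t. t < N \<and> \<phi> t = Suc j}"
          then have "\<not> x < c" using key by auto
          then have "x = (x - c) + c" "x - c < N - c" "\<phi>' (x - c) = j" using x \<phi>'_def by auto
          then show "x \<in> (\<lambda>s. s + c) ` {t. t < N - c \<and> \<phi>' t = j}" by blast
        next
          fix x assume "x \<in> (\<lambda>s. s + c) ` {t. t < N - c \<and> \<phi>' t = j}"
          then obtain s where s: "x = s + c" "s < N - c" "\<phi>' s = j" by auto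
          then have "\<phi> (s + c) \<ge> 1" using pos by simp
          then show "x \<in> {t. t < N \<and> \<phi> t = Suc j}" using s \<phi>'_def by auto
        qed
        have "card {t. t < N - c \<and> \<phi>' t = j} = card {t. t < N \<and> \<phi> t = Suc j}"
          unfolding eq by (rule card_image[symmetric]) (simp add: inj_on_def)
        also have "\<dots> = cs ! Suc j" using Cons.prems(5) j by simp
        finally show "card {t. t < N - c \<and> \<phi>' t = j} = cs' ! j" using cs by simp
      qed
      show "t - c < N - c" using Cons.prems(6) False by simp
    qed
    have "\<phi> t \<noteq> 0" using key Cons.prems(6) False by blast
    then show ?thesis using IH False cs unfolding \<phi>'_def
      by (simp add: stretch_Cons nth_append nth_Cons')
  qed
qed

lemma concat_single: "concat (map (\<lambda>(a, c). replicate c a) (zip xs (replicate (length xs) (Suc 0)))) = xs"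
  by (induction xs) auto

lemma induce_word_stretch:
  assumes "length u = p + length rs"
  shows "induce_word rs u = stretch (replicate p 1 @ map Suc (rev rs)) u"
proof -
  have u: "u = take p u @ drop p u" by simp
  have lt: "length (take p u) = p" using assms by simp
  have "stretch (replicate p 1 @ map Suc (rev rs)) u =
     concat (map (\<lambda>(a, c). replicate c a) (zip (take p u) (replicate p 1)))
     @ concat (map (\<lambda>(a, c). replicate c a) (zip (drop p u) (map Suc (rev rs))))"
    unfolding stretch_def by (subst u, subst zip_append) (use assms in \<open>simp_all del: append_take_drop_id\<close>)
  also have "concat (map (\<lambda>(a, c). replicate c a) (zip (take p u) (replicate p 1))) = take p u"
    using concat_single[of "take p u"] lt by simp
  also have "concat (map (\<lambda>(a, c). replicate c a) (zip (drop p u) (map Suc (rev rs))))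
     = concat (map (\<lambda>(a, e). replicate (Suc e) a) (zip (drop p u) (rev rs)))"
    by (simp add: zip_map2 comp_def split_def)
  finally show ?thesis unfolding induce_word_def using assms by simp
qed

lemma induce_word_length:
  assumes "length rs \<le> length u"
  shows "length (induce_word rs u) = length u + sum_list rs"
proof -
  have "length u = (length u - length rs) + length rs" using assms by simp
  then have "induce_word rs u = stretch (replicate (length u - length rs) 1 @ map Suc (rev rs)) u"
    by (rule induce_word_stretch)
  moreover have "length (stretch (replicate (length u - length rs) 1 @ map Suc (rev rs)) u) =
     sum_list (replicate (length u - length rs) 1 @ map Suc (rev rs))"
    using assms by (intro stretch_length) simp
  moreover have "sum_list (map Suc (rev rs)) = length rs + sum_list rs"
    by (induction rs) auto
  ultimately show ?thesis using assms by (simp add: sum_list_replicate)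
qed

theorem theorem3p8:
  fixes n m k :: nat and S' :: sform and I :: "(nat \<times> nat) list" and Os :: "nat \<Rightarrow> nat set"
  assumes "fvars S' \<subseteq> {1..n}"
    and "contractible n I"
    and "1 \<le> m" and "m \<le> n" and "VC I = {m..n}"
    and "VC I // simC I = Os ` {1..k}"
    and "\<forall>i\<in>{1..k}. \<forall>j\<in>{1..k}. i < j \<longrightarrow> set_gt (Os i) (Os j)"
  shows "sched_series n (And S' (edge_clause I)) =
    (let rs = map (\<lambda>i. card (Os i) - 1) [1..<k+1]; r = sum_list rs in
     (\<lambda>w. sched_series n S' w
          - induce rs (sched_series (n - r) (rename (contr_map m k Os) S')) w))"
proof -
  define V where "V = {m..n}"
  define R where "R = simC I"
  define G where "G = set I \<union> (set I)\<inverse>"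
  define cls where "cls x = (THE i. i \<in> {1..k} \<and> x \<in> Os i)" for x
  define \<psi> where "\<psi> = contr_map m k Os"
  define rs where "rs = map (\<lambda>i. card (Os i) - 1) [1..<k+1]"
  define r where "r = sum_list rs"
  have \<psi>2: "\<psi> j = (if j < m then j else m + k - cls j)" for j
    unfolding \<psi>_def contr_map_def cls_def by simp
  have VC: "VC I = V" using assms(5) V_def by simp
  have R_iff: "(x,y) \<in> R \<longleftrightarrow> x \<in> V \<and> y \<in> V \<and> (x,y) \<in> G\<^sup>*" for x y
    unfolding R_def simC_def G_def VC by auto
  have Rrefl: "x \<in> V \<Longrightarrow> (x,x) \<in> R" for x using R_iff by simp
  have Gsym: "G\<inverse> = G" unfolding G_def by auto
  have Rsym: "(x,y) \<in> R \<Longrightarrow> (y,x) \<in> R" for x y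
  proof -
    assume "(x,y) \<in> R"
    then have "x \<in> V" "y \<in> V" "(x,y) \<in> G\<^sup>*" using R_iff by auto
    then have "(y,x) \<in> (G\<inverse>)\<^sup>*" by (simp add: rtrancl_converseI)
    then show ?thesis using Gsym R_iff \<open>x \<in> V\<close> \<open>y \<in> V\<close> by simp
  qed
  have Rtrans: "(x,y) \<in> R \<Longrightarrow> (y,z) \<in> R \<Longrightarrow> (x,z) \<in> R" for x y z
    using R_iff rtrancl_trans by metis
  have OsR: "i \<in> {1..k} \<Longrightarrow> \<exists>x\<in>V. Os i = R``{x}" for i
  proof -
    assume "i \<in> {1..k}"
    then have "Os i \<in> V // R" using assms(6) VC R_def by auto
    then show ?thesis unfolding quotient_def by blast
  qed
  have Os_sub: "i \<in> {1..k} \<Longrightarrow> Os i \<subseteq> V" for i using OsR R_iff by blast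
  have Os_ne: "i \<in> {1..k} \<Longrightarrow> Os i \<noteq> {}" for i using OsR Rrefl by blast
  have Os_rel: "i \<in> {1..k} \<Longrightarrow> x \<in> Os i \<Longrightarrow> y \<in> Os i \<Longrightarrow> (x,y) \<in> R" for i x y
    using OsR Rsym Rtrans by blast
  have Os_closed: "i \<in> {1..k} \<Longrightarrow> x \<in> Os i \<Longrightarrow> (x,y) \<in> R \<Longrightarrow> y \<in> Os i" for i x y
    using OsR Rtrans by blast
  have ex_cls: "x \<in> V \<Longrightarrow> \<exists>i\<in>{1..k}. x \<in> Os i" for x
  proof -
    assume x: "x \<in> V"
    then have "R``{x} \<in> V // R" by (rule quotientI)
    then have "R``{x} \<in> Os ` {1..k}" using assms(6) VC R_def by simp
    moreover have "x \<in> R``{x}" using Rrefl x by simp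
    ultimately show ?thesis by auto
  qed
  have uniq: "i \<in> {1..k} \<Longrightarrow> j \<in> {1..k} \<Longrightarrow> x \<in> Os i \<Longrightarrow> x \<in> Os j \<Longrightarrow> i = j" for i j x
  proof -
    assume h: "i \<in> {1..k}" "j \<in> {1..k}" "x \<in> Os i" "x \<in> Os j"
    show "i = j"
    proof (rule ccontr)
      assume "i \<noteq> j"
      then consider "i < j" | "j < i" by linarith
      then show False
      proof cases
        case 1 then have "set_gt (Os i) (Os j)" using bspec[OF bspec[OF assms(7) h(1)] h(2)] by simp
        then have "x > x" using h(3,4) unfolding set_gt_def by blast
        then show False by simp
      next
        case 2 then have "set_gt (Os j) (Os i)" using bspec[OF bspec[OF assms(7) h(2)] h(1)] by simp
        then have "x > x" using h(3,4) unfolding set_gt_def by blast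
        then show False by simp
      qed
    qed
  qed
  have cls_eq: "i \<in> {1..k} \<Longrightarrow> x \<in> Os i \<Longrightarrow> cls x = i" for i x
  proof -
    assume h: "i \<in> {1..k}" "x \<in> Os i"
    show "cls x = i" unfolding cls_def
    proof (rule the_equality)
      show "i \<in> {1..k} \<and> x \<in> Os i" using h by simp
    next
      fix i' assume "i' \<in> {1..k} \<and> x \<in> Os i'"
      then show "i' = i" using uniq[of i' i x] h by simp
    qed
  qed
  have cls_in: "x \<in> V \<Longrightarrow> cls x \<in> {1..k} \<and> x \<in> Os (cls x)" for x
    using ex_cls cls_eq by metis
  have R_cls: "(x,y) \<in> R \<Longrightarrow> cls x = cls y" for x y
  proof -
    assume xy: "(x,y) \<in> R"
    then have "x \<in> V" using R_iff by auto
    then have c: "cls x \<in> {1..k}" "x \<in> Os (cls x)" using cls_in by auto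
    then have "y \<in> Os (cls x)" using Os_closed xy by blast
    then show ?thesis using cls_eq c by metis
  qed
  have fin: "i \<in> {1..k} \<Longrightarrow> finite (Os i)" for i
    using Os_sub V_def finite_subset by blast
  have Vun: "V = (\<Union>i\<in>{1..k}. Os i)" using Os_sub ex_cls by blast
  have cardV: "card V = (\<Sum>i\<in>{1..k}. card (Os i))"
    unfolding Vun by (rule card_UN_disjoint) (use fin uniq in auto)
  have cardV2: "card V = n + 1 - m" unfolding V_def by simp
  have cpos: "i \<in> {1..k} \<Longrightarrow> card (Os i) \<ge> 1" for i
    using fin Os_ne by (simp add: Suc_le_eq card_gt_0_iff)
  have r_sum: "r = (\<Sum>i\<in>{1..k}. card (Os i) - 1)"
    unfolding r_def rs_def
    by (metis atLeastLessThanSuc_atLeastAtMost Suc_eq_plus1 set_upt sum_set_upt_conv_sum_list_nat)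
  have "(\<Sum>i\<in>{1..k}. card (Os i)) = (\<Sum>i\<in>{1..k}. (card (Os i) - 1) + 1)"
  proof (rule sum.cong)
    fix i assume "i \<in> {1..k}"
    then show "card (Os i) = card (Os i) - 1 + 1" using cpos[of i] by simp
  qed simp
  also have "\<dots> = r + k" unfolding r_sum sum.distrib by simp
  finally have rk: "n + 1 - m = r + k" using cardV cardV2 by simp
  have nr: "n - r = m - 1 + k" using rk assms(3,4) by linarith
  have nr2: "n = m - 1 + k + r" using rk assms(3,4) by linarith
  have lrs: "length rs = k" unfolding rs_def by simp
  have rs_nth: "i \<in> {1..k} \<Longrightarrow> rs ! (i - 1) = card (Os i) - 1" for i
    unfolding rs_def by (auto simp del: upt_Suc)

  have \<psi>_range: "j \<in> {1..n} \<Longrightarrow> \<psi> j \<in> {1..m-1+k}" for j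
  proof -
    assume j: "j \<in> {1..n}"
    show ?thesis
    proof (cases "j < m")
      case True thus ?thesis using j \<psi>2 by auto
    next
      case False
      then have "j \<in> V" using j V_def by auto
      then have "cls j \<in> {1..k}" using cls_in by auto
      then show ?thesis using False \<psi>2 assms(3) by auto
    qed
  qed
  have \<psi>_surj: "j' \<in> {1..m-1+k} \<Longrightarrow> \<exists>j\<in>{1..n}. \<psi> j = j'" for j'
  proof -
    assume j': "j' \<in> {1..m-1+k}"
    show ?thesis
    proof (cases "j' < m")
      case True thus ?thesis using j' \<psi>2 assms(4) by (intro bexI[of _ j']) auto
    next
      case False
      define i where "i = m + k - j'"
      have i: "i \<in> {1..k}" using False j' i_def assms(3) by auto
      then obtain x where x: "x \<in> Os i" using Os_ne by blast
      then have xV: "x \<in> V" using Os_sub i by blast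
      then have "\<psi> x = m + k - i" using \<psi>2 cls_eq[OF i x] V_def by auto
      also have "\<dots> = j'" using i_def False j' by auto
      finally show ?thesis using xV V_def assms(3) by (intro bexI[of _ x]) auto
    qed
  qed
  have \<psi>_mono: "x \<le> y \<Longrightarrow> x \<in> {1..n} \<Longrightarrow> y \<in> {1..n} \<Longrightarrow> \<psi> x \<le> \<psi> y" for x y
  proof -
    assume h: "x \<le> y" "x \<in> {1..n}" "y \<in> {1..n}"
    show ?thesis
    proof (cases "y < m")
      case True thus ?thesis using h \<psi>2 by auto
    next
      case False
      then have yV: "y \<in> V" using h V_def by auto
      then have cy: "cls y \<in> {1..k}" "y \<in> Os (cls y)" using cls_in by auto
      show ?thesis
      proof (cases "x < m")
        case True thus ?thesis using False \<psi>2 cy by auto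
      next
        case False': False
        then have "x \<in> V" using h V_def by auto
        then have cx: "cls x \<in> {1..k}" "x \<in> Os (cls x)" using cls_in by auto
        have "\<not> cls x < cls y"
        proof
          assume "cls x < cls y"
          then have "set_gt (Os (cls x)) (Os (cls y))" using assms(7) cx cy by blast
          then have "x > y" using cx cy unfolding set_gt_def by blast
          then show False using h by simp
        qed
        then show ?thesis using False False' \<psi>2 cx by auto
      qed
    qed
  qed
  have \<psi>_fiber: "x \<in> {1..n} \<Longrightarrow> y \<in> {1..n} \<Longrightarrow> \<psi> x = \<psi> y \<Longrightarrow> x = y \<or> (x,y) \<in> R" for x y
  proof -
    assume h: "x \<in> {1..n}" "y \<in> {1..n}" "\<psi> x = \<psi> y"
    show ?thesis
    proof (cases "x < m \<or> y < m")
      case True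
      have ge: "z \<in> {1..n} \<Longrightarrow> \<not> z < m \<Longrightarrow> \<psi> z \<ge> m" for z
      proof -
        assume "z \<in> {1..n}" "\<not> z < m"
        then have "z \<in> V" using V_def by auto
        then have "cls z \<in> {1..k}" using cls_in by auto
        then show ?thesis using \<psi>2 \<open>\<not> z < m\<close> by auto
      qed
      have "x = y"
      proof (cases "x < m")
        case True
        then have "\<psi> x = x" using \<psi>2 by simp
        then have "y < m" using ge h True by (metis leD)
        then show ?thesis using h \<psi>2 True by simp
      next
        case False
        then have "y < m" using True by simp
        then have "\<psi> y = y" using \<psi>2 by simp
        then have "x < m" using ge h \<open>y < m\<close> by (metis leD)
        then show ?thesis using False by simp
      qed
      then show ?thesis by simp
    next
      case False
      then have "x \<in> V" "y \<in> V" using h V_def by auto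
      then have cx: "cls x \<in> {1..k}" "x \<in> Os (cls x)" and cy: "cls y \<in> {1..k}" "y \<in> Os (cls y)"
        using cls_in by auto
      have "cls x = cls y" using h(3) False \<psi>2 cx cy by auto
      then show ?thesis using Os_rel cx cy by metis
    qed
  qed
  have \<psi>_edge: "(a,b) \<in> set I \<Longrightarrow> \<psi> a = \<psi> b" for a b
  proof -
    assume ab: "(a,b) \<in> set I"
    then have abV: "a \<in> V" "b \<in> V" using VC unfolding VC_def by force+
    moreover have "(a,b) \<in> G\<^sup>*" using ab G_def by auto
    ultimately have "(a,b) \<in> R" using R_iff by auto
    then have "cls a = cls b" by (rule R_cls)
    then show ?thesis using \<psi>2 abV V_def by simp
  qed
  have edgesV: "(a,b) \<in> set I \<Longrightarrow> a \<in> {1..n} \<and> b \<in> {1..n}" for a b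
    using VC assms(3) unfolding VC_def V_def by force

  have K: "length (induce_word rs u) = n \<and> (\<forall>j\<in>{1..n}. induce_word rs u ! (j-1) = u ! (\<psi> j - 1))"
    if lu: "length u = n - r" for u
  proof -
    define cs where "cs = replicate (m-1) 1 @ map Suc (rev rs)"
    have E: "induce_word rs u = stretch cs u"
      unfolding cs_def by (rule induce_word_stretch) (use lu nr lrs in simp)
    have lcs: "length cs = length u" using lu nr lrs cs_def by simp
    have srev: "sum_list (map Suc (rev rs)) = length rs + sum_list rs" by (induction rs) auto
    have scs: "n = sum_list cs" using nr2 lrs srev r_def cs_def by (simp add: sum_list_replicate)
    have len: "length (induce_word rs u) = n" using E stretch_length[OF lcs] scs by simp
    have nth: "stretch cs u ! t = u ! (\<psi> (t+1) - 1)" if t: "t < n" for t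
    proof (rule stretch_nth[OF lcs scs _ _ _ t])
      show "\<forall>s t. s \<le> t \<longrightarrow> t < n \<longrightarrow> \<psi> (s + 1) - 1 \<le> \<psi> (t + 1) - 1"
        using \<psi>_mono by (simp add: diff_le_mono)
      show "\<forall>t<n. \<psi> (t + 1) - 1 < length u"
      proof (intro allI impI)
        fix t assume "t < n"
        then have "\<psi> (t+1) \<in> {1..m-1+k}" using \<psi>_range by simp
        then show "\<psi> (t + 1) - 1 < length u" using lu nr by auto
      qed
      show "\<forall>j<length u. card {t. t < n \<and> \<psi> (t + 1) - 1 = j} = cs ! j"
      proof (intro allI impI)
        fix j assume j: "j < length u"
        show "card {t. t < n \<and> \<psi> (t + 1) - 1 = j} = cs ! j"
        proof (cases "j < m - 1")
          case True
          have "{t. t < n \<and> \<psi> (t + 1) - 1 = j} = {j}"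
          proof (rule set_eqI, rule iffI)
            fix t assume t: "t \<in> {t. t < n \<and> \<psi> (t + 1) - 1 = j}"
            show "t \<in> {j}"
            proof (cases "t + 1 < m")
              case True thus ?thesis using t \<psi>2 by auto
            next
              case False
              then have "t+1 \<in> V" using t V_def by auto
              then have "cls (t+1) \<in> {1..k}" using cls_in by auto
              then show ?thesis using t False \<psi>2 \<open>j < m - 1\<close> by auto
            qed
          next
            fix t assume "t \<in> {j}"
            then show "t \<in> {t. t < n \<and> \<psi> (t + 1) - 1 = j}" using True \<psi>2 assms(4) by auto
          qed
          then show ?thesis using True cs_def by (simp add: nth_append)
        next
          case False
          define i where "i = m + k - 1 - j"
          have i: "i \<in> {1..k}" using False j lu nr i_def assms(3) by auto
          have "{t. t < n \<and> \<psi> (t + 1) - 1 = j} = (\<lambda>x. x - 1) ` Os i"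
          proof (rule set_eqI, rule iffI)
            fix t assume t: "t \<in> {t. t < n \<and> \<psi> (t + 1) - 1 = j}"
            have "\<not> t + 1 < m" using t \<psi>2 False by auto
            then have "t+1 \<in> V" using t V_def by auto
            then have c: "cls (t+1) \<in> {1..k}" "t+1 \<in> Os (cls (t+1))" using cls_in by auto
            then have "cls (t+1) = i" using t \<open>\<not> t + 1 < m\<close> \<psi>2 i_def False assms(3) by auto
            then show "t \<in> (\<lambda>x. x - 1) ` Os i" using c by force
          next
            fix t assume "t \<in> (\<lambda>x. x - 1) ` Os i"
            then obtain x where x: "x \<in> Os i" "t = x - 1" by auto
            then have xV: "x \<in> V" using Os_sub i by blast
            then have "cls x = i" using cls_eq i x by simp
            then have "\<psi> x = m + k - i" using \<psi>2 xV V_def by auto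
            moreover have "x = t + 1" using x xV V_def assms(3) by auto
            ultimately show "t \<in> {t. t < n \<and> \<psi> (t + 1) - 1 = j}"
              using xV V_def i_def i False by auto
          qed
          moreover have "inj_on (\<lambda>x. x - 1) (Os i)"
          proof (rule inj_onI)
            fix x y assume "x \<in> Os i" "y \<in> Os i" "x - 1 = y - 1"
            moreover have "x \<ge> m" "y \<ge> m" using Os_sub[OF i] V_def \<open>x \<in> Os i\<close> \<open>y \<in> Os i\<close> by auto
            ultimately show "x = y" using assms(3) by linarith
          qed
          ultimately have "card {t. t < n \<and> \<psi> (t + 1) - 1 = j} = card (Os i)"
            by (simp add: card_image)
          moreover have "cs ! j = Suc (rs ! (i - 1))"
          proof -
            have "cs ! j = map Suc (rev rs) ! (j - (m - 1))"
              using False cs_def by (simp add: nth_append)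
            also have "\<dots> = Suc (rev rs ! (j - (m - 1)))" using j lu nr lrs False by simp
            also have "rev rs ! (j - (m - 1)) = rs ! (length rs - Suc (j - (m - 1)))"
              using j lu nr lrs False by (simp add: rev_nth)
            also have "length rs - Suc (j - (m - 1)) = i - 1" using lrs i_def False j lu nr assms(3) by auto
            finally show ?thesis .
          qed
          ultimately show ?thesis using rs_nth[OF i] cpos[OF i] by simp
        qed
      qed
    qed
    show ?thesis
    proof
      show "length (induce_word rs u) = n" by (rule len)
      show "\<forall>j\<in>{1..n}. induce_word rs u ! (j - 1) = u ! (\<psi> j - 1)"
      proof
        fix j assume j: "j \<in> {1..n}"
        then have "j - 1 < n" "j - 1 + 1 = j" by auto
        then show "induce_word rs u ! (j - 1) = u ! (\<psi> j - 1)" using E nth by metis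
      qed
    qed
  qed
  have injE: "u = v" if "length u = n - r" "length v = n - r" "induce_word rs u = induce_word rs v" for u v
  proof (rule nth_equalityI)
    show "length u = length v" using that by simp
    fix t assume t: "t < length u"
    then have "t + 1 \<in> {1..m-1+k}" using that nr by auto
    then obtain j where j: "j \<in> {1..n}" "\<psi> j = t + 1" using \<psi>_surj by blast
    have "u ! t = induce_word rs u ! (j - 1)" using K[OF that(1)] j by simp
    also have "\<dots> = induce_word rs v ! (j - 1)" using that(3) by simp
    also have "\<dots> = v ! t" using K[OF that(2)] j by simp
    finally show "u ! t = v ! t" .
  qed
  have Egen: "length u = length w - r" if "length rs \<le> length u" "induce_word rs u = w" for u w
    using induce_word_length[OF that(1)] that(2) r_def by simp
  show ?thesis unfolding Let_def rs_def[symmetric] r_def[symmetric] \<psi>_def[symmetric]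
  proof (rule ext)
    fix w
    define T where "T = sched_series (n - r) (rename \<psi> S')"
    define U where "U = {u. length rs \<le> length u \<and> induce_word rs u = w}"
    have indU: "induce rs T w = sum T U" unfolding induce_def U_def by simp
    have "sched_series n (And S' (edge_clause I)) w = sched_series n S' w - induce rs T w"
    proof (cases "\<exists>u0. length u0 = n - r \<and> induce_word rs u0 = w")
      case True
      then obtain u0 where u0: "length u0 = n - r" "induce_word rs u0 = w" by blast
      have lw: "length w = n" using K[OF u0(1)] u0(2) by simp
      have wn: "\<forall>j\<in>{1..n}. w ! (j-1) = u0 ! (\<psi> j - 1)" using K[OF u0(1)] u0(2) by simp
      have "U = {u0}"
      proof
        show "U \<subseteq> {u0}"
        proof
          fix u assume "u \<in> U"
          then have u: "length rs \<le> length u" "induce_word rs u = w" unfolding U_def by auto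
          then have "length u = n - r" using Egen[OF u(1) u(2)] lw by simp
          then have "u = u0" using injE u0 u by simp
          then show "u \<in> {u0}" by simp
        qed
        show "{u0} \<subseteq> U" using u0 lrs nr unfolding U_def by simp
      qed
      then have ind: "induce rs T w = T u0" using indU by simp
      have set_eq: "set w = set u0"
      proof
        show "set w \<subseteq> set u0"
        proof
          fix a assume "a \<in> set w"
          then obtain t where t: "t < length w" "w ! t = a" by (auto simp: in_set_conv_nth)
          then have "t + 1 \<in> {1..n}" using lw by simp
          then have "a = u0 ! (\<psi> (t+1) - 1)" "\<psi> (t+1) \<in> {1..m-1+k}"
            using bspec[OF wn \<open>t + 1 \<in> {1..n}\<close>] t \<psi>_range by auto
          then show "a \<in> set u0" using u0(1) nr by auto
        qed
        show "set u0 \<subseteq> set w"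
        proof
          fix a assume "a \<in> set u0"
          then obtain t where t: "t < length u0" "u0 ! t = a" by (auto simp: in_set_conv_nth)
          then have "t + 1 \<in> {1..m-1+k}" using u0(1) nr by auto
          then obtain j where j: "j \<in> {1..n}" "\<psi> j = t + 1" using \<psi>_surj by blast
          then have "a = w ! (j - 1)" using wn t by simp
          then show "a \<in> set w" using j lw by auto
        qed
      qed
      have hold_eq: "holds (\<lambda>i. u0 ! (i-1)) (rename \<psi> S') = holds (\<lambda>i. w ! (i-1)) S'"
        unfolding holds_rename
      proof (rule holds_cong)
        show "\<forall>i\<in>fvars S'. ((\<lambda>i. u0 ! (i - 1)) \<circ> \<psi>) i = w ! (i - 1)"
          using assms(1) wn by auto
      qed
      have nC: "\<not> holds (\<lambda>i. w ! (i-1)) (edge_clause I)"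
      proof -
        have "w ! (a-1) = w ! (b-1)" if ab: "(a,b) \<in> set I" for a b
          using wn edgesV[OF ab] \<psi>_edge[OF ab] by simp
        then show ?thesis unfolding holds_edge by auto
      qed
      show ?thesis unfolding ind unfolding T_def sched_series_def using u0 lw set_eq hold_eq nC by simp
    next
      case False
      have "sum T U = 0"
      proof (rule sum.neutral, rule ballI)
        fix u assume "u \<in> U"
        then have u: "induce_word rs u = w" unfolding U_def by auto
        then have "length u \<noteq> n - r" using False by blast
        then show "T u = 0" unfolding T_def sched_series_def by simp
      qed
      then have ind0: "induce rs T w = 0" using indU by simp
      have C: "holds (\<lambda>i. w ! (i-1)) (edge_clause I)" if v: "length w = n"
      proof (rule ccontr)
        assume "\<not> holds (\<lambda>i. w ! (i-1)) (edge_clause I)"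
        then have eqE: "\<And>a b. (a,b) \<in> set I \<Longrightarrow> w ! (a-1) = w ! (b-1)"
          unfolding holds_edge by auto
        define \<sigma> where "\<sigma> j' = (SOME j. j \<in> {1..n} \<and> \<psi> j = j')" for j'
        have \<sigma>: "\<sigma> j' \<in> {1..n} \<and> \<psi> (\<sigma> j') = j'" if "j' \<in> {1..m-1+k}" for j'
          unfolding \<sigma>_def by (rule someI_ex) (use \<psi>_surj[OF that] in blast)
        define u0 where "u0 = map (\<lambda>j'. w ! (\<sigma> j' - 1)) [1..<n-r+1]"
        have lu0: "length u0 = n - r" unfolding u0_def by (simp del: upt_Suc)
        have Gstep: "(x,y) \<in> G\<^sup>* \<Longrightarrow> w ! (x-1) = w ! (y-1)" for x y
        proof (induction rule: rtrancl_induct)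
          case base then show ?case by simp
        next
          case (step y z)
          then have "(y,z) \<in> set I \<or> (z,y) \<in> set I" unfolding G_def by auto
          then have "w ! (y-1) = w ! (z-1)" using eqE by metis
          then show ?case using step by simp
        qed
        have "induce_word rs u0 = w"
        proof (rule nth_equalityI)
          show "length (induce_word rs u0) = length w" using K[OF lu0] v by simp
          fix t assume "t < length (induce_word rs u0)"
          then have t: "t < n" using K[OF lu0] by simp
          define j where "j = t + 1"
          have j: "j \<in> {1..n}" using t j_def by simp
          have E: "induce_word rs u0 ! t = u0 ! (\<psi> j - 1)" using bspec[OF conjunct2[OF K[OF lu0]] j] j_def by simp
          have pj: "\<psi> j \<in> {1..m-1+k}" using \<psi>_range j by simp
          have "u0 ! (\<psi> j - 1) = w ! (\<sigma> (\<psi> j) - 1)"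
          proof -
            have lt: "\<psi> j - 1 < length [1..<n-r+1]" using pj nr by (simp del: upt_Suc) linarith
            have "[1..<n-r+1] ! (\<psi> j - 1) = \<psi> j" using pj nr by (simp add: nth_upt del: upt_Suc)
            then show ?thesis unfolding u0_def using nth_map[OF lt] by (simp del: upt_Suc)
          qed
          moreover obtain y where y: "y = \<sigma> (\<psi> j)" by simp
          moreover have yj: "y \<in> {1..n}" "\<psi> y = \<psi> j" using \<sigma>[OF pj] y by auto
          have "w ! (y - 1) = w ! (j - 1)"
          proof -
            have "y = j \<or> (y,j) \<in> R" using \<psi>_fiber[OF yj(1) j yj(2)] .
            then show ?thesis using R_iff Gstep by blast
          qed
          ultimately show "induce_word rs u0 ! t = w ! t" using E j_def by simp
        qed
        then show False using False lu0 by blast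
      qed
      have "sched_series n (And S' (edge_clause I)) w = sched_series n S' w"
        unfolding sched_series_def using C by auto
      then show ?thesis using ind0 by simp
    qed
    then show "sched_series n (And S' (edge_clause I)) w =
        sched_series n S' w - induce rs (sched_series (n - r) (rename \<psi> S')) w"
      unfolding T_def .
  qed
qed

end
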